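(* Let $p\in\mathbb{N}_0$, let $n\ge p+1$ be an integer, let $\eta>0$ and write $x=\cosh\eta$. Then \[ \sum_{k=-p}^{p}\frac{(-1)^{k+1}e^{k\eta}R_p^k(x)}{n-k}=(-1)^{p+1}p!\,(n-p-1)!\,e^{n\eta}\sinh^p\eta\,P_p^{-n}(\coth\eta). \]
   Context: For $z>1$ and integers $p\ge0$, $n\ge1$, $P_p^{-n}(z)=\frac{1}{n!}\left(\frac{z-1}{z+1}\right)^{n/2}{}_2F_1\!\left(-p,p+1;1+n;\frac{1-z}{2}\right)$ (associated Legendre function of the first kind). The logarithmic polynomials $R_p^k(x)$, $p\in\mathbb{N}_0$, $k\in\mathbb{Z}$, are defined by $R_0^0(x)=1$, $R_0^k(x)=0$ for $k\ne0$, and $R_p^k(x)=\tfrac12 R_{p-1}^{k-1}(x)+xR_{p-1}^k(x)+\tfrac12 R_{p-1}^{k+1}(x)$ for $p\ge1$. *)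

theory Defs
  imports "HOL-Analysis.Analysis"
begin

definition hyp2F1 :: "real \<Rightarrow> real \<Rightarrow> real \<Rightarrow> real \<Rightarrow> real" where
  "hyp2F1 a b c w = (\<Sum>j. pochhammer a j * pochhammer b j / (pochhammer c j * fact j) * w ^ j)"

text \<open>Associated Legendre function P_p^{-n}(z) for z > 1.\<close>
definition legendreP_neg :: "nat \<Rightarrow> nat \<Rightarrow> real \<Rightarrow> real" where
  "legendreP_neg p n z = 1 / fact n * ((z - 1) / (z + 1)) powr (real n / 2)
      * hyp2F1 (- real p) (real p + 1) (1 + real n) ((1 - z) / 2)"

fun logR :: "nat \<Rightarrow> int \<Rightarrow> real \<Rightarrow> real" where
  "logR 0 k x = (if k = 0 then 1 else 0)"
| "logR (Suc p) k x = logR p (k - 1) x / 2 + x * logR p k x + logR p (k + 1) x / 2"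

end

theory Submission
  imports Defs
begin

lemma pow_int01: "((\<lambda>t::real. t ^ a) has_integral (1 / (real a + 1))) {0..1}"
proof -
  have "((\<lambda>t::real. t ^ a) has_integral ((\<lambda>t. t ^ (a+1) / (real a + 1)) 1 - (\<lambda>t. t ^ (a+1) / (real a + 1)) 0)) {0..1}"
    apply (rule fundamental_theorem_of_calculus)
     apply simp
    unfolding has_real_derivative_iff_has_vector_derivative[symmetric]
  proof -
    fix x :: real
    have "((\<lambda>t. t ^ (a+1)) has_real_derivative (real (a+1) * x ^ a)) (at x)"
      using DERIV_pow[of "a+1" x] by simp
    then have "((\<lambda>t. t ^ (a+1) / (real a + 1)) has_real_derivative (real (a+1) * x ^ a / (real a + 1))) (at x)"
      by (intro DERIV_cdivide)
    moreover have "real (a+1) * x ^ a / (real a + 1) = x ^ a" by (simp add: add.commute)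
    ultimately show "((\<lambda>t. t ^ (a+1) / (real a + 1)) has_real_derivative x ^ a) (at x within {0..1})"
      by (metis has_field_derivative_at_within)
  qed
  then show ?thesis by simp
qed

lemma beta_alg:
  fixes A B F x y :: real
  assumes "F \<noteq> 0" "x + y + 1 \<noteq> 0" "x + y + 2 \<noteq> 0"
  shows "A * B / ((x + y + 1) * F) - (x + 1) * A * B / ((x + y + 2) * ((x + y + 1) * F))
       = A * ((y + 1) * B) / ((x + y + 2) * ((x + y + 1) * F))"
proof -
  have "A * B / ((x + y + 1) * F) = (x + y + 2) * A * B / ((x + y + 2) * ((x + y + 1) * F))"
    using assms by simp
  then show ?thesis by (simp add: diff_divide_distrib[symmetric] algebra_simps)
qed

lemma beta01: "((\<lambda>t::real. t ^ a * (1 - t) ^ b) has_integral (fact a * fact b / fact (a + b + 1))) {0..1}"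
proof (induction b arbitrary: a)
  case 0
  have "fact a * fact 0 / fact (a + 0 + 1) = (1 / (real a + 1) :: real)"
    by (simp add: divide_simps)
  then show ?case using pow_int01[of a] by (simp add: add.commute)
next
  case (Suc b)
  have "((\<lambda>t::real. t ^ a * (1 - t) ^ b - t ^ (a+1) * (1 - t) ^ b) has_integral
     (fact a * fact b / fact (a + b + 1) - fact (a+1) * fact b / fact (a + 1 + b + 1))) {0..1}"
    by (intro has_integral_diff Suc)
  moreover have "(\<lambda>t::real. t ^ a * (1 - t) ^ b - t ^ (a+1) * (1 - t) ^ b) = (\<lambda>t. t ^ a * (1 - t) ^ Suc b)"
    by (auto simp: algebra_simps)
  moreover have "(fact a * fact b / fact (a + b + 1) - fact (a+1) * fact b / fact (a + 1 + b + 1) :: real)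
     = fact a * fact (Suc b) / fact (a + Suc b + 1)"
  proof -
    have e1: "fact (a + b + 1) = (real a + real b + 1) * fact (a + b)"
      by (simp add: fact_Suc add.commute)
    have e2: "fact (a + 1 + b + 1) = (real a + real b + 2) * ((real a + real b + 1) * fact (a + b))"
      using fact_Suc[of "a+b+1"] e1 by (simp add: add.commute add.left_commute)
    have e3: "fact (a + Suc b + 1) = fact (a + 1 + b + 1)" by simp
    have e4: "fact (a + 1) = (real a + 1) * fact a" by (simp add: add.commute)
    have e5: "fact (Suc b) = (real b + 1) * fact b" by (simp add: add.commute)
    have p: "fact (a+b) > (0::real)" "real a + real b + 1 > 0" "real a + real b + 2 > 0" by auto
    show ?thesis unfolding e3 e1 e2 e4 e5 using p beta_alg[of "fact (a+b)" "real a" "real b" "fact a" "fact b"]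
      by (simp add: mult.assoc)
  qed
  ultimately show ?case by simp
qed
lemma logR_zero: "\<bar>k\<bar> > int p \<Longrightarrow> logR p k x = 0"
  by (induction p arbitrary: k) auto

lemma logR_sum_superset:
  assumes "finite A" "{-int p..int p} \<subseteq> A"
  shows "(\<Sum>k\<in>A. logR p k x * f k) = (\<Sum>k\<in>{-int p..int p}. logR p k x * f k)"
  by (rule sum.mono_neutral_right[OF assms]) (auto intro!: logR_zero)

lemma int_shift_image: "(\<lambda>k::int. k + c) ` {a..b} = {a+c..b+c}"
proof
  show "{a + c..b + c} \<subseteq> (\<lambda>k. k + c) ` {a..b}"
  proof
    fix y assume "y \<in> {a + c..b + c}"
    then show "y \<in> (\<lambda>k. k + c) ` {a..b}" by (intro image_eqI[of _ _ "y - c"]) auto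
  qed
qed auto

lemma sum_shift_int:
  "(\<Sum>k\<in>{a..b}. g (k + c)) = (\<Sum>j\<in>{a+c..b+c}. g (j::int))"
proof -
  have "(\<Sum>j\<in>{a+c..b+c}. g j) = (\<Sum>j\<in>(\<lambda>k. k + c) ` {a..b}. g j)" by (simp add: int_shift_image)
  also have "\<dots> = (\<Sum>k\<in>{a..b}. g (k + c))" by (subst sum.reindex) (auto simp: inj_on_def)
  finally show ?thesis by simp
qed

lemma genfun:
  fixes t x :: real
  assumes "t \<noteq> 0"
  shows "(\<Sum>k\<in>{-int p..int p}. logR p k x * t powi k) = (x + (t + 1/t)/2) ^ p"
proof (induction p)
  case 0
  then show ?case by simp
next
  case (Suc p)
  let ?G = "(\<Sum>k\<in>{-int p..int p}. logR p k x * t powi k)"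
  let ?I = "{-int (Suc p)..int (Suc p)}"
  have s1: "(\<Sum>k\<in>?I. logR p (k - 1) x * t powi k) = t * ?G"
  proof -
    have "(\<Sum>k\<in>?I. logR p (k - 1) x * t powi k) = (\<Sum>k\<in>?I. logR p (k + (-1)) x * (t * t powi (k + (-1))))"
      using assms by (intro sum.cong) (auto simp: power_int_diff)
    also have "\<dots> = (\<Sum>j\<in>{-int (Suc p) + -1..int (Suc p) + -1}. logR p j x * (t * t powi j))"
      by (rule sum_shift_int)
    also have "\<dots> = (\<Sum>j\<in>{-int p..int p}. logR p j x * (t * t powi j))"
      by (rule logR_sum_superset) auto
    finally show ?thesis by (simp add: sum_distrib_left algebra_simps)
  qed
  have s2: "(\<Sum>k\<in>?I. logR p (k + 1) x * t powi k) = (1/t) * ?G"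
  proof -
    have "(\<Sum>k\<in>?I. logR p (k + 1) x * t powi k) = (\<Sum>k\<in>?I. logR p (k + 1) x * ((1/t) * t powi (k + 1)))"
      using assms by (intro sum.cong) (auto simp: power_int_add)
    also have "\<dots> = (\<Sum>j\<in>{-int (Suc p) + 1..int (Suc p) + 1}. logR p j x * ((1/t) * t powi j))"
      by (rule sum_shift_int)
    also have "\<dots> = (\<Sum>j\<in>{-int p..int p}. logR p j x * ((1/t) * t powi j))"
      by (rule logR_sum_superset) auto
    finally show ?thesis by (simp add: sum_distrib_left algebra_simps)
  qed
  have s3: "(\<Sum>k\<in>?I. logR p k x * t powi k) = ?G"
    by (rule logR_sum_superset) auto
  have "(\<Sum>k\<in>?I. logR (Suc p) k x * t powi k) =
     (\<Sum>k\<in>?I. logR p (k - 1) x * t powi k) / 2 + x * (\<Sum>k\<in>?I. logR p k x * t powi k)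
       + (\<Sum>k\<in>?I. logR p (k + 1) x * t powi k) / 2"
    by (simp add: sum.distrib sum_divide_distrib sum_distrib_left algebra_simps)
  also have "\<dots> = (x + (t + 1/t)/2) * ?G" unfolding s1 s2 s3 by (simp add: algebra_simps)
  finally show ?case using Suc.IH by simp
qed

lemma poch_fact: "pochhammer (real a + 1) j = (fact (a + j) / fact a :: real)"
proof -
  have "fact (a + j) = (pochhammer 1 a * pochhammer (1 + real a) j :: real)"
    by (simp add: pochhammer_fact pochhammer_product')
  then show ?thesis by (simp add: pochhammer_fact[symmetric] add.commute)
qed

lemma poch_neg: assumes "j \<le> p"
  shows "pochhammer (- real p) j = ((-1) ^ j * fact p / fact (p - j) :: real)"
proof -
  have "pochhammer (- real p) j = (-1) ^ j * pochhammer (real p - real j + 1) j"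
    by (rule pochhammer_minus)
  also have "real p - real j + 1 = real (p - j) + 1" using assms by simp
  also have "pochhammer (real (p - j) + 1) j = (fact (p - j + j) / fact (p - j) :: real)" by (rule poch_fact)
  finally show ?thesis using assms by simp
qed

lemma alg2: fixes a b X Y C :: real
  shows "a \<noteq> 0 \<Longrightarrow> - (a * b) * (X * Y / (C * a)) = - (b * X * Y) / C"
  by (simp add: field_simps)

theorem mainTheorem5:
  fixes p n :: nat and \<eta> :: real
  assumes "n \<ge> p + 1" and "\<eta> > 0"
  shows "(\<Sum>k\<in>{-int p..int p}. (-1) powi (k + 1) * exp (of_int k * \<eta>) * logR p k (cosh \<eta>)
            / (real n - of_int k))
       = (-1) ^ (p + 1) * fact p * fact (n - p - 1) * exp (real n * \<eta>) * sinh \<eta> ^ p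
            * legendreP_neg p n (cosh \<eta> / sinh \<eta>)"
proof -
  define q where "q = exp \<eta>"
  have q1: "q > 1" using assms by (simp add: q_def)
  have chq: "cosh \<eta> = (q + 1/q)/2" by (simp add: cosh_def q_def exp_minus field_simps)
  have shq: "sinh \<eta> = (q - 1/q)/2" by (simp add: sinh_def q_def exp_minus field_simps)
  define x where "x = cosh \<eta>"
  define m where "m = (\<lambda>k::int. nat (int n - 1 - k))"
  define c where "c = (\<lambda>k::int. (-1) powi (k+1) * exp (of_int k * \<eta>) * logR p k x)"
  define L where "L = (\<Sum>k\<in>{-int p..int p}. (-1) powi (k + 1) * exp (of_int k * \<eta>) * logR p k (cosh \<eta>)
            / (real n - of_int k))"
  define g where "g = (\<lambda>s::real. - (s ^ (n - 1 - p) * (1 - s) ^ p * (s - q^2) ^ p) / (2*q) ^ p)"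
  define d where "d = (\<lambda>j. - (real (p choose j) * (-1) ^ j * (1 - q^2) ^ (p - j)) / (2*q) ^ p)"
  define V where "V = (\<Sum>j\<le>p. d j * (fact (n - 1 - p) * fact (p + j) / fact (n + j)))"
  have hf: "((\<lambda>s. \<Sum>k\<in>{-int p..int p}. c k * s ^ m k) has_integral L) {0..1}"
  proof -
    have "((\<lambda>s. \<Sum>k\<in>{-int p..int p}. c k * s ^ m k) has_integral
         (\<Sum>k\<in>{-int p..int p}. c k * (1 / (real (m k) + 1)))) {0..1}"
      by (rule has_integral_sum, simp, rule has_integral_mult_right, rule pow_int01)
    moreover have "(\<Sum>k\<in>{-int p..int p}. c k * (1 / (real (m k) + 1))) = L"
      unfolding L_def
    proof (intro sum.cong refl)
      fix k assume "k \<in> {-int p..int p}"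
      then have "real (m k) + 1 = real n - of_int k" using assms unfolding m_def by auto
      then show "c k * (1 / (real (m k) + 1)) = (-1) powi (k + 1) * exp (of_int k * \<eta>) * logR p k (cosh \<eta>)
            / (real n - of_int k)" by (simp add: c_def x_def)
    qed
    ultimately show ?thesis by simp
  qed
  have fg: "(\<Sum>k\<in>{-int p..int p}. c k * s ^ m k) = g s" if s: "s \<in> {0<..1}" for s
  proof -
    define t where "t = - q / s"
    have s0: "s \<noteq> 0" using s by auto
    have t0: "t \<noteq> 0" using s0 q1 by (simp add: t_def)
    have ck: "c k * s ^ m k = - (s ^ (n-1)) * (logR p k x * t powi k)" if k: "k \<in> {-int p..int p}" for k
    proof -
      have "s ^ m k = s powi (int (n - 1) + (- k))"
        using k assms unfolding m_def by (simp add: power_int_of_nat[symmetric] of_nat_diff)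
      also have "\<dots> = s powi int (n-1) * s powi (-k)" using s0 by (rule power_int_add[OF disjI1])
      also have "\<dots> = s ^ (n - 1) / s powi k" by (simp add: power_int_minus divide_inverse)
      finally have e1: "s ^ m k = s ^ (n - 1) / s powi k" .
      have e2: "exp (of_int k * \<eta>) = q powi k" by (simp add: q_def exp_power_int)
      have e3: "t powi k = (-1) powi k * q powi k / s powi k"
      proof -
        have "t = ((-1) * q) / s" by (simp add: t_def)
        then show ?thesis by (simp only: power_int_divide_distrib power_int_mult_distrib)
      qed
      have e4: "(-1::real) powi (k+1) = - ((-1) powi k)" by (simp add: power_int_add)
      show ?thesis unfolding c_def e1 e2 e3 e4 using s0 by (simp add: field_simps)
    qed
    have "(\<Sum>k\<in>{-int p..int p}. c k * s ^ m k) = - (s ^ (n-1)) * (\<Sum>k\<in>{-int p..int p}. logR p k x * t powi k)"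
      by (simp add: ck sum_distrib_left)
    also have "\<dots> = - (s ^ (n-1)) * (x + (t + 1/t)/2) ^ p" using genfun[OF t0] by simp
    also have "x + (t + 1/t)/2 = (1 - s) * (s - q^2) / (2 * q * s)"
      unfolding x_def chq t_def using s0 q1 by (simp add: field_simps power2_eq_square)
    also have "- (s ^ (n-1)) * ((1 - s) * (s - q^2) / (2 * q * s)) ^ p = g s"
    proof -
      have "s ^ (n - 1) = s ^ (n - 1 - p) * s ^ p" using assms by (simp add: power_add[symmetric])
      moreover have "((1 - s) * (s - q^2) / (2 * q * s)) ^ p = (1 - s) ^ p * (s - q^2) ^ p / ((2 * q) ^ p * s ^ p)"
        by (simp add: power_divide power_mult_distrib)
      ultimately show ?thesis unfolding g_def using s0 q1 alg2[of "s ^ p" "s ^ (n - 1 - p)"]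
        by simp
    qed
    finally show ?thesis .
  qed
  have hg: "(g has_integral L) {0..1}"
    by (rule has_integral_spike_finite[OF _ _ hf, of "{0}"]) (auto simp: fg)
  have gsum: "g s = (\<Sum>j\<le>p. d j * (s ^ (n - 1 - p) * (1 - s) ^ (p + j)))" for s
  proof -
    have "(s - q^2) ^ p = ((- (1 - s)) + (1 - q^2)) ^ p" by simp
    also have "\<dots> = (\<Sum>j\<le>p. real (p choose j) * (- (1 - s)) ^ j * (1 - q^2) ^ (p - j))"
      by (rule binomial_ring)
    finally have "(s - q^2) ^ p = (\<Sum>j\<le>p. real (p choose j) * (- (1 - s)) ^ j * (1 - q^2) ^ (p - j))" .
    then have "g s = - (s ^ (n - 1 - p) * (1 - s) ^ p / (2*q) ^ p) *
       (\<Sum>j\<le>p. real (p choose j) * (- (1 - s)) ^ j * (1 - q^2) ^ (p - j))"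
      unfolding g_def by simp
    also have "\<dots> = (\<Sum>j\<le>p. d j * (s ^ (n - 1 - p) * (1 - s) ^ (p + j)))"
      unfolding sum_distrib_left
    proof (rule sum.cong[OF refl])
      fix j assume "j \<in> {..p}"
      show "- (s ^ (n - 1 - p) * (1 - s) ^ p / (2*q) ^ p) *
          (real (p choose j) * (- (1 - s)) ^ j * (1 - q^2) ^ (p - j)) =
          d j * (s ^ (n - 1 - p) * (1 - s) ^ (p + j))"
        unfolding d_def by (subst power_minus) (simp add: power_add mult_ac)
    qed
    finally show ?thesis .
  qed
  have hg2: "(g has_integral V) {0..1}"
  proof -
    have "((\<lambda>s. \<Sum>j\<le>p. d j * (s ^ (n - 1 - p) * (1 - s) ^ (p + j))) has_integral V) {0..1}"
      unfolding V_def
    proof (intro has_integral_sum, simp)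
      fix j assume "j \<in> {..p}"
      have "n - 1 - p + (p + j) + 1 = n + j" using assms by simp
      then show "((\<lambda>s. d j * (s ^ (n - 1 - p) * (1 - s) ^ (p + j))) has_integral
          d j * (fact (n - 1 - p) * fact (p + j) / fact (n + j))) {0..1}"
        using has_integral_mult_right[OF beta01[of "n - 1 - p" "p + j"], of "d j"] by simp
    qed
    moreover have "g = (\<lambda>s. \<Sum>j\<le>p. d j * (s ^ (n - 1 - p) * (1 - s) ^ (p + j)))"
      by (rule ext) (rule gsum)
    ultimately show ?thesis by simp
  qed
  have LV: "L = V" using hg hg2 by (rule has_integral_unique)
  define z where "z = cosh \<eta> / sinh \<eta>"
  define u where "u = 1 - q^2"
  have "1 < q * q" using q1 by (rule less_1_mult[OF q1])
  then have u0: "u \<noteq> 0" unfolding u_def by (simp add: power2_eq_square)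
  have q0: "q \<noteq> 0" using q1 by simp
  have D0: "q * q - 1 \<noteq> 0" using \<open>1 < q * q\<close> by simp
  have zf: "z = (q * q + 1) / (q * q - 1)"
    unfolding z_def chq shq using q0 D0 by (simp add: field_simps)
  have z1: "z - 1 = 2 / (q * q - 1)" unfolding zf using D0 by (simp add: field_simps)
  have z2: "z + 1 = 2 * (q * q) / (q * q - 1)" unfolding zf using D0 by (simp add: field_simps)
  have zq: "(z - 1) / (z + 1) = (1/q)^2"
    unfolding z1 z2 using q0 D0 by (simp add: field_simps power2_eq_square)
  have pw: "((1/q)^2) powr (real n / 2) = (1/q)^n"
  proof -
    have "((1/q)^2) = (1/q) powr 2" using q1 by (simp add: powr_numeral)
    then have "((1/q)^2) powr (real n / 2) = (1/q) powr (real n)" by (simp add: powr_powr)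
    also have "\<dots> = (1/q)^n" using q1 by (simp add: powr_realpow)
    finally show ?thesis .
  qed
  define w where "w = 1 / u"
  have wq: "(1 - z)/2 = w"
  proof -
    have "1 - z = - (z - 1)" by simp
    then show ?thesis unfolding z1 w_def u_def using D0 by (simp add: field_simps power2_eq_square)
  qed
  define T where "T = (\<lambda>j. pochhammer (- real p) j * pochhammer (real p + 1) j
       / (pochhammer (1 + real n) j * fact j) * w ^ j)"
  have hyp: "hyp2F1 (- real p) (real p + 1) (1 + real n) w = (\<Sum>j\<le>p. T j)"
    unfolding hyp2F1_def T_def by (rule suminf_finite) (auto simp: pochhammer_of_nat_eq_0_lemma)
  have expn: "exp (real n * \<eta>) = q ^ n" by (simp add: q_def exp_of_nat_mult)
  have shu: "sinh \<eta> = - u / (2 * q)" unfolding shq u_def using q0 by (simp add: field_simps power2_eq_square)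
  define K where "K = (-1) ^ (p + 1) * fact p * fact (n - p - 1) * q ^ n * sinh \<eta> ^ p * (1 / fact n * (1/q)^n)"
  have R: "(-1) ^ (p + 1) * fact p * fact (n - p - 1) * exp (real n * \<eta>) * sinh \<eta> ^ p
            * legendreP_neg p n (cosh \<eta> / sinh \<eta>) = K * (\<Sum>j\<le>p. T j)"
    unfolding legendreP_neg_def z_def[symmetric] zq pw wq hyp expn K_def by (simp add: mult_ac)
  have KT: "K * T j = d j * (fact (n - 1 - p) * fact (p + j) / fact (n + j))" if j: "j \<le> p" for j
  proof -
    have sp: "(-1) ^ (p + 1) * sinh \<eta> ^ p = - (u ^ (p - j) * u ^ j / (2 * q) ^ p)"
    proof -
      have "sinh \<eta> ^ p = (-1) ^ p * u ^ p / (2 * q) ^ p" unfolding shu power_divide power_minus[of u] by simp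
      moreover have "u ^ p = u ^ (p - j) * u ^ j" using j by (simp add: power_add[symmetric])
      ultimately show ?thesis by simp
    qed
    have c1: "pochhammer (1 + real n) j = (fact (n + j) / fact n :: real)"
      using poch_fact[of n j] by (simp add: add.commute)
    have c2: "real (p choose j) = fact p / (fact j * fact (p - j))" by (rule binomial_fact[OF j])
    have e: "n - p - 1 = n - 1 - p" by simp
    show ?thesis
      unfolding K_def T_def d_def poch_neg[OF j] poch_fact c1 c2 w_def e u_def[symmetric]
      using sp u0 q0 by (simp add: field_simps)
  qed
  have "L = K * (\<Sum>j\<le>p. T j)" unfolding LV V_def sum_distrib_left by (intro sum.cong refl) (simp add: KT)
  then show ?thesis using R unfolding L_def by simp
qed

end
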